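(* Let $G$ be the cdf of a continuous real random variable. For $\lambda\in\mathbb{R}$ define $$F_{R19}(x)=(1-\lambda)G(x)+3\lambda G^2(x)-2\lambda G^3(x),$$ and for $(\lambda_1,\lambda_2)\in\mathbb{R}^2$ define $F_G(x)=\lambda_1 G(x)+(\lambda_2-\lambda_1)G^2(x)+(1-\lambda_2)G^3(x)$. Let $\mathscr{S}_G=\{(\lambda_1,\lambda_2):0\le\lambda_1\le1,\ -1\le\lambda_2\le1\}$ and $\mathscr{S}_{MG}=\{(\lambda_1,\lambda_2):0\le\lambda_1\le3,\ 0\le\lambda_2\le3,\ 0\le\lambda_1+\lambda_2\le3\}$. Then: (i) For every $\lambda\in[-1,1]$ with $\lambda\neq0$, there is no $(\lambda_1,\lambda_2)\in\mathscr{S}_G$ such that $F_{R19}$ with parameter $\lambda$ coincides with $F_G$ with parameters $(\lambda_1,\lambda_2)$. (ii) For every $\lambda\in[-\tfrac12,1]$, $(1-\lambda,1+2\lambda)\in\mathscr{S}_{MG}$ and $F_{R19}$ with parameter $\lambda$ coincides with $F_G$ with parameters $(1-\lambda,1+2\lambda)$. (iii) For every $\lambda\in[-2,1]$, $F_{R19}$ is a cdf.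
   Context: A cdf is a nondecreasing, right-continuous function $F:\mathbb{R}\to[0,1]$ with limits $0$ at $-\infty$ and $1$ at $+\infty$. $G^k(x)=(G(x))^k$. *)

theory Defs
  imports "HOL-Analysis.Analysis"
begin

definition is_cdf :: "(real \<Rightarrow> real) \<Rightarrow> bool" where
  "is_cdf F \<longleftrightarrow> mono F \<and> (\<forall>x. continuous (at_right x) F) \<and> (\<forall>x. 0 \<le> F x \<and> F x \<le> 1)
     \<and> (F \<longlongrightarrow> 0) at_bot \<and> (F \<longlongrightarrow> 1) at_top"

definition F_R19 :: "real \<Rightarrow> (real \<Rightarrow> real) \<Rightarrow> real \<Rightarrow> real" where
  "F_R19 lam G x = (1 - lam) * G x + 3 * lam * (G x)^2 - 2 * lam * (G x)^3"

definition F_G :: "real \<Rightarrow> real \<Rightarrow> (real \<Rightarrow> real) \<Rightarrow> real \<Rightarrow> real" where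
  "F_G l1 l2 G x = l1 * G x + (l2 - l1) * (G x)^2 + (1 - l2) * (G x)^3"

definition S_G :: "(real \<times> real) set" where
  "S_G = {(l1, l2). 0 \<le> l1 \<and> l1 \<le> 1 \<and> -1 \<le> l2 \<and> l2 \<le> 1}"

definition S_MG :: "(real \<times> real) set" where
  "S_MG = {(l1, l2). 0 \<le> l1 \<and> l1 \<le> 3 \<and> 0 \<le> l2 \<and> l2 \<le> 3 \<and> 0 \<le> l1 + l2 \<and> l1 + l2 \<le> 3}"

end

theory Submission
  imports Defs
begin
lemma h_bounds: fixes s t :: real assumes "0\<le>s" "s\<le>1" "0\<le>t" "t\<le>1"
  shows "0 \<le> 3*(t+s) - 2*(t^2 + t * s + s^2)" "3*(t+s) - 2*(t^2 + t * s + s^2) \<le> 3/2"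
proof -
  have e1: "3*(t+s) - 2*(t^2 + t * s + s^2) = t*(1-t)+s*(1-s)+(t+s)*(2-t-s)" by (simp add: algebra_simps power2_eq_square)
  have "0 \<le> t*(1-t)" "0 \<le> s*(1-s)" "0 \<le> (t+s)*(2-t-s)" using assms by auto
  then show "0 \<le> 3*(t+s) - 2*(t^2 + t * s + s^2)" using e1 by linarith
  have e2: "3/2 - (3*(t+s) - 2*(t^2 + t * s + s^2)) = (3/2)*(t+s-1)^2 + (t-s)^2/2" by (simp add: field_simps power2_eq_square)
  have "0 \<le> (3/2)*(t+s-1)^2 + (t-s)^2/2" by simp
  then show "3*(t+s) - 2*(t^2 + t * s + s^2) \<le> 3/2" using e2 by linarith
qed

lemma p_mono: fixes s t lam :: real assumes "0\<le>s" "s\<le>t" "t\<le>1" "-2 \<le> lam" "lam \<le> 1"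
  shows "(1-lam)* s + 3*lam* s^2 - 2*lam* s^3 \<le> (1-lam)*t + 3*lam*t^2 - 2*lam*t^3"
proof -
  define h where "h = 3*(t+s) - 2*(t^2 + t * s + s^2)"
  have hb: "0 \<le> h" "h \<le> 3/2" using h_bounds[of s t] assms unfolding h_def by auto
  have q: "0 \<le> 1 - lam + lam*h"
  proof (cases "lam \<ge> 0")
    case True then show ?thesis using hb assms by (simp add: add_nonneg_nonneg)
  next
    case False
    then have "lam*h \<ge> lam*(3/2)" using hb by (simp add: mult_left_mono_neg)
    then show ?thesis using assms by linarith
  qed
  have e: "((1-lam)*t + 3*lam*t^2 - 2*lam*t^3) - ((1-lam)* s + 3*lam* s^2 - 2*lam* s^3) = (t-s)*(1 - lam + lam*h)"
    unfolding h_def by (simp add: algebra_simps power2_eq_square power3_eq_cube)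
  have "0 \<le> (t-s)*(1 - lam + lam*h)" using q assms by simp
  then show ?thesis using e by linarith
qed

lemma attain:
  fixes G :: "real \<Rightarrow> real" and c :: real
  assumes cdf: "is_cdf G" and cont: "continuous_on UNIV G" and c: "0 < c" "c < 1"
  shows "\<exists>x. G x = c"
proof -
  have m: "mono G" and l0: "(G \<longlongrightarrow> 0) at_bot" and l1: "(G \<longlongrightarrow> 1) at_top"
    using cdf unfolding is_cdf_def by auto
  have "\<forall>\<^sub>F x in at_bot. G x < c" using order_tendstoD(2)[OF l0] c by auto
  then obtain a where a: "G a < c" by (metis (mono_tags, lifting) eventually_at_bot_linorder order.refl)
  have "\<forall>\<^sub>F x in at_top. G x > c" using order_tendstoD(1)[OF l1] c by auto
  then obtain b where b: "G b > c" by (metis (mono_tags, lifting) eventually_at_top_linorder order.refl)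
  have ab: "a \<le> b"
  proof (rule ccontr)
    assume "\<not> a \<le> b" then have "G b \<le> G a" using m by (simp add: monoD)
    then show False using a b by linarith
  qed
  have "\<forall>x. a \<le> x \<and> x \<le> b \<longrightarrow> isCont G x" using cont by (simp add: continuous_on_eq_continuous_at)
  then show ?thesis using IVT[of G a c b] a b ab by auto
qed

theorem proposition5:
  fixes G :: "real \<Rightarrow> real"
  assumes cdf: "is_cdf G" and cont: "continuous_on UNIV G"
  shows "(\<forall>lam. -1 \<le> lam \<and> lam \<le> 1 \<and> lam \<noteq> 0 \<longrightarrow>
            \<not> (\<exists>(l1, l2) \<in> S_G. F_R19 lam G = F_G l1 l2 G))
       \<and> (\<forall>lam. -(1/2) \<le> lam \<and> lam \<le> 1 \<longrightarrow>
            (1 - lam, 1 + 2 * lam) \<in> S_MG \<and> F_R19 lam G = F_G (1 - lam) (1 + 2 * lam) G)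
       \<and> (\<forall>lam. -2 \<le> lam \<and> lam \<le> 1 \<longrightarrow> is_cdf (F_R19 lam G))"
proof (intro conjI allI impI)
  fix lam :: real
  assume lam: "-1 \<le> lam \<and> lam \<le> 1 \<and> lam \<noteq> 0"
  obtain x1 where x1: "G x1 = 1/4" using attain[OF cdf cont, of "1/4"] by auto
  obtain x2 where x2: "G x2 = 1/2" using attain[OF cdf cont, of "1/2"] by auto
  obtain x3 where x3: "G x3 = 3/4" using attain[OF cdf cont, of "3/4"] by auto
  show "\<not> (\<exists>(l1, l2) \<in> S_G. F_R19 lam G = F_G l1 l2 G)"
  proof
    assume "\<exists>(l1, l2) \<in> S_G. F_R19 lam G = F_G l1 l2 G"
    then obtain l1 l2 where S: "(l1, l2) \<in> S_G" and eq: "F_R19 lam G = F_G l1 l2 G" by auto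
    have e1: "F_R19 lam G x1 = F_G l1 l2 G x1" and e2: "F_R19 lam G x2 = F_G l1 l2 G x2"
      and e3: "F_R19 lam G x3 = F_G l1 l2 G x3" using eq by auto
    from e1 have E1: "(1 - lam) * (1/4) + 3 * lam * (1/16) - 2 * lam * (1/64) = l1 * (1/4) + (l2 - l1) * (1/16) + (1 - l2) * (1/64)"
      unfolding F_R19_def F_G_def x1 by (simp add: power2_eq_square power3_eq_cube)
    from e2 have E2: "(1 - lam) * (1/2) + 3 * lam * (1/4) - 2 * lam * (1/8) = l1 * (1/2) + (l2 - l1) * (1/4) + (1 - l2) * (1/8)"
      unfolding F_R19_def F_G_def x2 by (simp add: power2_eq_square power3_eq_cube)
    from e3 have E3: "(1 - lam) * (3/4) + 3 * lam * (9/16) - 2 * lam * (27/64) = l1 * (3/4) + (l2 - l1) * (9/16) + (1 - l2) * (27/64)"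
      unfolding F_R19_def F_G_def x3 by (simp add: power2_eq_square power3_eq_cube)
    have "0 \<le> l1 \<and> l1 \<le> 1 \<and> -1 \<le> l2 \<and> l2 \<le> 1" using S unfolding S_G_def by auto
    moreover have "l1 = 1 - lam" "l2 = 1 + 2*lam" using E1 E2 by (simp_all add: field_simps)
    ultimately have "lam = 0" by linarith
    then show False using lam by simp
  qed
next
  fix lam :: real
  assume lam: "-(1/2) \<le> lam \<and> lam \<le> 1"
  then show "(1 - lam, 1 + 2 * lam) \<in> S_MG" unfolding S_MG_def by auto
  show "F_R19 lam G = F_G (1 - lam) (1 + 2 * lam) G"
    unfolding F_R19_def F_G_def by (rule ext) (simp add: algebra_simps)
next
  fix lam :: real
  assume lam: "-2 \<le> lam \<and> lam \<le> 1"
  have m: "mono G" and rc: "\<forall>x. continuous (at_right x) G" and b: "\<forall>x. 0 \<le> G x \<and> G x \<le> 1"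
    and l0: "(G \<longlongrightarrow> 0) at_bot" and l1: "(G \<longlongrightarrow> 1) at_top"
    using cdf unfolding is_cdf_def by auto
  define p where "p = (\<lambda>t::real. (1-lam)*t + 3*lam*t^2 - 2*lam*t^3)"
  have pm: "p s \<le> p t" if "0 \<le> s" "s \<le> t" "t \<le> 1" for s t
    using p_mono[of s t lam] that lam unfolding p_def by auto
  have Feq: "F_R19 lam G = (\<lambda>x. (1-lam)*G x + 3*lam*(G x)^2 - 2*lam*(G x)^3)"
    unfolding F_R19_def by (rule ext) simp
  have Fp: "F_R19 lam G x = p (G x)" for x unfolding F_R19_def p_def by simp
  show "is_cdf (F_R19 lam G)"
    unfolding is_cdf_def
  proof (intro conjI allI)
    show "mono (F_R19 lam G)"
    proof (rule monoI)
      fix x y :: real assume "x \<le> y"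
      then have "G x \<le> G y" using m by (simp add: monoD)
      then show "F_R19 lam G x \<le> F_R19 lam G y" unfolding Fp using pm b by auto
    qed
  next
    fix x
    show "continuous (at_right x) (F_R19 lam G)" unfolding Feq
      using rc by (intro continuous_intros) auto
  next
    fix x
    have "p 0 \<le> p (G x)" "p (G x) \<le> p 1" using pm b by auto
    then show "0 \<le> F_R19 lam G x" "F_R19 lam G x \<le> 1" unfolding Fp by (auto simp: p_def)
  next
    have "((\<lambda>x. (1-lam)*G x + 3*lam*(G x)^2 - 2*lam*(G x)^3) \<longlongrightarrow> (1-lam)*0 + 3*lam*0^2 - 2*lam*0^3) at_bot"
      by (intro tendsto_intros l0)
    then show "(F_R19 lam G \<longlongrightarrow> 0) at_bot" unfolding Feq by simp
  next
    have "((\<lambda>x. (1-lam)*G x + 3*lam*(G x)^2 - 2*lam*(G x)^3) \<longlongrightarrow> (1-lam)*1 + 3*lam*1^2 - 2*lam*1^3) at_top"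
      by (intro tendsto_intros l1)
    then show "(F_R19 lam G \<longlongrightarrow> 1) at_top" unfolding Feq by simp
  qed
qed

end
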